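(* Let $(x_m)_{m\ge0}$, $(y_n)_{n\ge1}$, $(z_m)_{m\ge0}$ be elements of a commutative ring, and define an array $(a_{n,m})_{n,m\ge0}$ by $a_{0,m}=x_m$ for all $m\ge0$ and $$a_{n,m}=z_m\,a_{n-1,m+1}+y_n\,a_{n-1,m}\qquad(n\ge1,\ m\ge 0).$$ Then for all $n,m\ge0$, $$a_{n,m}=\sum_{k=0}^n x_{m+k}\,(z_mz_{m+1}\cdots z_{m+k-1})\,e_{n-k}(y_1,y_2,\ldots,y_n),$$ where $e_i$ denotes the $i$-th elementary symmetric polynomial (with $e_0=1$) and the empty product equals $1$. *)

theory Defs
  imports Main
begin

definition elem_sym :: "nat \<Rightarrow> (nat \<Rightarrow> 'a::comm_ring_1) \<Rightarrow> nat \<Rightarrow> 'a" where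
  "elem_sym i y n = (\<Sum>S \<in> {S. S \<subseteq> {1..n} \<and> card S = i}. \<Prod>j\<in>S. y j)"

end

theory Submission
  imports Defs
begin

lemma esym0: "elem_sym 0 y n = 1"
proof -
  have "{S. S \<subseteq> {1..n} \<and> card S = 0} = {{}}"
    by (auto dest: finite_subset)
  then show ?thesis by (simp add: elem_sym_def)
qed

lemma esym_big: "i > n \<Longrightarrow> elem_sym i y n = 0"
proof -
  assume "i > n"
  have "{S. S \<subseteq> {1..n} \<and> card S = i} = {}"
  proof (rule equals0I)
    fix S assume "S \<in> {S. S \<subseteq> {1..n} \<and> card S = i}"
    then have S: "S \<subseteq> {1..n}" "card S = i" by auto
    have "card S \<le> n" using card_mono[OF finite_atLeastAtMost S(1)] by simp
    then show False using \<open>i > n\<close> S(2) by simp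
  qed
  then show ?thesis unfolding elem_sym_def by (metis sum.empty)
qed

lemma esym_Suc:
  "elem_sym (Suc i) y (Suc n) = elem_sym (Suc i) y n + y (Suc n) * elem_sym i y n"
proof -
  define B where "B = {S. S \<subseteq> {1..n} \<and> card S = Suc i}"
  define D where "D = {S. S \<subseteq> {1..n} \<and> card S = i}"
  have eq: "{S. S \<subseteq> {1..Suc n} \<and> card S = Suc i} = B \<union> insert (Suc n) ` D"
  proof (rule set_eqI, rule iffI)
    fix S assume "S \<in> {S. S \<subseteq> {1..Suc n} \<and> card S = Suc i}"
    then have S: "S \<subseteq> {1..Suc n}" "card S = Suc i" by auto
    have fS: "finite S" using S(1) finite_subset by blast
    show "S \<in> B \<union> insert (Suc n) ` D"
    proof (cases "Suc n \<in> S")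
      case True
      have "S - {Suc n} \<in> D" unfolding D_def using S fS True by auto
      moreover have "S = insert (Suc n) (S - {Suc n})" using True by auto
      ultimately show ?thesis by blast
    next
      case False
      then have "S \<subseteq> {1..n}" using S(1) by (auto simp: le_Suc_eq)
      then show ?thesis using S unfolding B_def by auto
    qed
  next
    fix S assume "S \<in> B \<union> insert (Suc n) ` D"
    then show "S \<in> {S. S \<subseteq> {1..Suc n} \<and> card S = Suc i}"
    proof
      assume "S \<in> B" then show ?thesis unfolding B_def by auto
    next
      assume "S \<in> insert (Suc n) ` D"
      then obtain T where T: "T \<subseteq> {1..n}" "card T = i" "S = insert (Suc n) T"
        unfolding D_def by auto
      have "finite T" using T(1) finite_subset by blast
      moreover have "Suc n \<notin> T" using T(1) by auto
      ultimately show ?thesis using T by auto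
    qed
  qed
  have fB: "finite B" unfolding B_def by (rule finite_subset[of _ "Pow {1..n}"]) auto
  have fD: "finite D" unfolding D_def by (rule finite_subset[of _ "Pow {1..n}"]) auto
  have disj: "B \<inter> insert (Suc n) ` D = {}" unfolding B_def D_def by auto
  have inj: "inj_on (insert (Suc n)) D"
  proof (rule inj_onI)
    fix S T assume "S \<in> D" "T \<in> D" "insert (Suc n) S = insert (Suc n) T"
    moreover have "Suc n \<notin> S" "Suc n \<notin> T" using \<open>S \<in> D\<close> \<open>T \<in> D\<close> unfolding D_def by auto
    ultimately show "S = T" by (metis Diff_insert_absorb)
  qed
  have "(\<Sum>S\<in>insert (Suc n) ` D. \<Prod>j\<in>S. y j) = (\<Sum>T\<in>D. \<Prod>j\<in>insert (Suc n) T. y j)"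
    using sum.reindex[OF inj] by simp
  also have "\<dots> = (\<Sum>T\<in>D. y (Suc n) * (\<Prod>j\<in>T. y j))"
  proof (rule sum.cong)
    fix T assume "T \<in> D"
    then have "finite T" "Suc n \<notin> T" unfolding D_def using finite_subset by auto
    then show "(\<Prod>j\<in>insert (Suc n) T. y j) = y (Suc n) * (\<Prod>j\<in>T. y j)" by simp
  qed simp
  also have "\<dots> = y (Suc n) * elem_sym i y n"
    by (simp add: elem_sym_def D_def sum_distrib_left)
  finally have C: "(\<Sum>S\<in>insert (Suc n) ` D. \<Prod>j\<in>S. y j) = y (Suc n) * elem_sym i y n" .
  show ?thesis
    unfolding elem_sym_def[of "Suc i" y "Suc n"] eq
    using sum.union_disjoint[OF fB finite_imageI[OF fD] disj, of "\<lambda>S. \<Prod>j\<in>S. y j"] C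
    by (simp add: elem_sym_def B_def)
qed

theorem mainTheorem6:
  fixes x y z :: "nat \<Rightarrow> 'a::comm_ring_1"
    and a :: "nat \<Rightarrow> nat \<Rightarrow> 'a"
  assumes init: "\<And>m. a 0 m = x m"
    and rec: "\<And>n m. n \<ge> 1 \<Longrightarrow> a n m = z m * a (n - 1) (m + 1) + y n * a (n - 1) m"
  shows "a n m = (\<Sum>k = 0..n. x (m + k) * (\<Prod>j = m..<m + k. z j) * elem_sym (n - k) y n)"
proof (induction n arbitrary: m)
  case 0
  then show ?case by (simp add: init esym0)
next
  case (Suc n)
  define P where "P m k = (\<Prod>j = m..<m + k. z j)" for m k
  have Ps: "P m (Suc k) = z m * P (Suc m) k" for k
    unfolding P_def by (simp add: prod.atLeast_Suc_lessThan)
  have trm: "x (m + k) * P m k * elem_sym (Suc n - k) y (Suc n)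
      = x (m + k) * P m k * elem_sym (Suc n - k) y n
        + (if k \<le> n then y (Suc n) * (x (m + k) * P m k * elem_sym (n - k) y n) else 0)"
    if "k \<le> Suc n" for k
  proof (cases "k \<le> n")
    case True
    then have "Suc n - k = Suc (n - k)" by simp
    then show ?thesis using True by (simp add: esym_Suc algebra_simps)
  next
    case False
    then have "k = Suc n" using that by simp
    then show ?thesis by (simp add: esym0)
  qed
  have "(\<Sum>k = 0..Suc n. x (m + k) * P m k * elem_sym (Suc n - k) y (Suc n))
      = (\<Sum>k = 0..Suc n. x (m + k) * P m k * elem_sym (Suc n - k) y n)
        + (\<Sum>k = 0..Suc n. (if k \<le> n then y (Suc n) * (x (m + k) * P m k * elem_sym (n - k) y n) else 0))"
    by (simp add: trm sum.distrib del: sum.atLeast0_atMost_Suc)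
  also have "(\<Sum>k = 0..Suc n. (if k \<le> n then y (Suc n) * (x (m + k) * P m k * elem_sym (n - k) y n) else 0))
      = y (Suc n) * a n m"
    by (simp add: Suc.IH P_def sum_distrib_left)
  also have "(\<Sum>k = 0..Suc n. x (m + k) * P m k * elem_sym (Suc n - k) y n)
      = (\<Sum>k = 0..n. x (m + Suc k) * P m (Suc k) * elem_sym (n - k) y n)"
    by (subst sum.atLeast0_atMost_Suc_shift) (simp add: esym_big)
  also have "\<dots> = z m * a n (m + 1)"
    unfolding Suc.IH sum_distrib_left
  proof (rule sum.cong)
    fix k assume "k \<in> {0..n}"
    show "x (m + Suc k) * P m (Suc k) * elem_sym (n - k) y n =
      z m * (x (m + 1 + k) * (\<Prod>j = m + 1..<m + 1 + k. z j) * elem_sym (n - k) y n)"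
      unfolding Ps by (simp add: P_def algebra_simps)
  qed simp
  finally show ?case using rec[of "Suc n" m] by (simp add: P_def add.commute)
qed

end
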